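(* Let $S\subset\mathbb R^2$ be nonempty and compact, and closed under $(x,y)\mapsto(\pm x,\pm y)$ for all four sign choices. Suppose $\hat{\mathbf a}=(\hat x_1,\hat y_1)\in S$ and $\hat{\mathbf b}=(\hat x_2,\hat y_2)\in S$ form an optimal pure strategy pair (saddle point) of the game on $S$ with payoff $K$, i.e. $K(\hat{\mathbf a},\mathbf b)\le K(\hat{\mathbf a},\hat{\mathbf b})\le K(\mathbf a,\hat{\mathbf b})$ for all $\mathbf a,\mathbf b\in S$. Then $\hat x_2\ge 0$, $\hat y_2\ge 0$, $\hat x_1\le 0$ and $\hat y_1\le 0$.
   Context: Standing setup. Fix $\sigma_x,\sigma_y>0$ and $\rho\in(-1,1)$, and let $(\xi,\eta)$ be a bivariate normal random vector with mean $(0,0)$ and covariance matrix $\Sigma=\begin{pmatrix}\sigma_x^2&\rho\sigma_x\sigma_y\\ \rho\sigma_x\sigma_y&\sigma_y^2\end{pmatrix}$. Player I (the minimizer) chooses $\mathbf a=(x_1,y_1)\in\mathbb R^2$ and Player II (the maximizer) chooses $\mathbf b=(x_2,y_2)\in\mathbb R^2$. Let $C_1(\mathbf a,\mathbf b)=\{(x,y):(x_1-x)^2+(y_1-y)^2<(x_2-x)^2+(y_2-y)^2\}$ and $C_2(\mathbf a,\mathbf b)=\{(x,y):(x_1-x)^2+(y_1-y)^2>(x_2-x)^2+(y_2-y)^2\}$. The payoff to Player II (paid by Player I) is $K(\mathbf a,\mathbf b)=x_1+y_1$ if $\mathbf a=\mathbf b$, and $K(\mathbf a,\mathbf b)=(x_1+y_1)\,P((\xi,\eta)\in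 C_1(\mathbf a,\mathbf b))+(x_2+y_2)\,P((\xi,\eta)\in C_2(\mathbf a,\mathbf b))$ if $\mathbf a\neq\mathbf b$. For $\mathbf a=(x,y)$ write $-\mathbf a=(-x,-y)$. *)

theory Defs
  imports "HOL-Probability.Probability"
begin

text \<open>Density of the centred bivariate normal law with standard deviations sx, sy and
correlation r (covariance matrix [[sx^2, r sx sy],[r sx sy, sy^2]]).\<close>
definition bvn_density :: "real \<Rightarrow> real \<Rightarrow> real \<Rightarrow> real \<times> real \<Rightarrow> real" where
  "bvn_density sx sy r p =
     (let x = fst p; y = snd p in
      exp (- (x\<^sup>2 / sx\<^sup>2 - 2 * r * x * y / (sx * sy) + y\<^sup>2 / sy\<^sup>2) / (2 * (1 - r\<^sup>2)))
      / (2 * pi * sx * sy * sqrt (1 - r\<^sup>2)))"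

definition bvn :: "real \<Rightarrow> real \<Rightarrow> real \<Rightarrow> (real \<times> real) measure" where
  "bvn sx sy r = density lborel (\<lambda>p. ennreal (bvn_density sx sy r p))"

definition C1 :: "real \<times> real \<Rightarrow> real \<times> real \<Rightarrow> (real \<times> real) set" where
  "C1 a b = {p. (fst a - fst p)\<^sup>2 + (snd a - snd p)\<^sup>2 < (fst b - fst p)\<^sup>2 + (snd b - snd p)\<^sup>2}"

definition C2 :: "real \<times> real \<Rightarrow> real \<times> real \<Rightarrow> (real \<times> real) set" where
  "C2 a b = {p. (fst a - fst p)\<^sup>2 + (snd a - snd p)\<^sup>2 > (fst b - fst p)\<^sup>2 + (snd b - snd p)\<^sup>2}"

text \<open>Payoff to Player II (the maximizer), paid by Player I (the minimizer).\<close>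
definition K :: "real \<Rightarrow> real \<Rightarrow> real \<Rightarrow> real \<times> real \<Rightarrow> real \<times> real \<Rightarrow> real" where
  "K sx sy r a b =
     (if a = b then fst a + snd a
      else (fst a + snd a) * measure (bvn sx sy r) (C1 a b)
         + (fst b + snd b) * measure (bvn sx sy r) (C2 a b))"

end

theory Submission
  imports Defs
begin

lemma bvn_meas[measurable]: "bvn_density sx sy r \<in> borel_measurable borel"
  unfolding bvn_density_def Let_def divide_inverse
  by (intro borel_measurable_continuous_onI continuous_intros)
lemma bvn_sym: "bvn_density sx sy r (-p) = bvn_density sx sy r p"
  by (simp add: bvn_density_def Let_def)

lemma bvn_pos: assumes "sx > 0" "sy > 0" "-1 < r" "r < 1"
  shows "bvn_density sx sy r p > 0"
proof -
  have "r\<^sup>2 < 1" using assms by (simp add: abs_square_less_1)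
  then show ?thesis using assms by (simp add: bvn_density_def Let_def)
qed


lemma lborel_uminus: "distr lborel borel uminus = (lborel :: (real\<times>real) measure)"
proof -
  have "(\<lambda>x::real\<times>real. 0 + (-1::real) *\<^sub>R x) = uminus" by auto
  then show ?thesis using lborel_affine[of "-1::real" "0::real\<times>real"] by (simp add: density_1)
qed

lemma bvn_sym_set:
  assumes [measurable]: "A \<in> sets borel" "B \<in> sets borel" and AB: "\<And>p. p \<in> B \<longleftrightarrow> -p \<in> A"
  shows "emeasure (bvn sx sy r) B = emeasure (bvn sx sy r) A"
proof -
  have "emeasure (bvn sx sy r) B = (\<integral>\<^sup>+ p. ennreal (bvn_density sx sy r p) * indicator B p \<partial>lborel)"
    unfolding bvn_def by (subst emeasure_density) auto
  also have "\<dots> = (\<integral>\<^sup>+ p. (\<lambda>q. ennreal (bvn_density sx sy r q) * indicator A q) (-p) \<partial>lborel)"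
    by (intro nn_integral_cong) (simp add: bvn_sym indicator_def AB)
  also have "\<dots> = (\<integral>\<^sup>+ q. ennreal (bvn_density sx sy r q) * indicator A q \<partial>distr lborel borel uminus)"
    by (subst nn_integral_distr) auto
  also have "\<dots> = emeasure (bvn sx sy r) A"
    unfolding bvn_def lborel_uminus by (subst emeasure_density) auto
  finally show ?thesis .
qed

lemma box_meas: "emeasure (lborel :: (real\<times>real) measure) ({a..a+1} \<times> {b..b+1}) = 1"
  by (simp add: lborel_prod[symmetric] lborel.emeasure_pair_measure_Times)

lemma bvn_pos_set:
  assumes "sx > 0" "sy > 0" "-1 < r" "r < 1"
  and [measurable]: "A \<in> sets borel" and sub: "{a..a+1} \<times> {b..b+1} \<subseteq> A"
  shows "emeasure (bvn sx sy r) A > 0"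
proof (rule ccontr)
  assume "\<not> ?thesis"
  then have "emeasure (bvn sx sy r) A = 0" by simp
  then have "(\<integral>\<^sup>+ p. ennreal (bvn_density sx sy r p) * indicator A p \<partial>lborel) = 0"
    unfolding bvn_def by (subst (asm) emeasure_density) auto
  then have "AE p in lborel. ennreal (bvn_density sx sy r p) * indicator A p = 0"
    by (subst (asm) nn_integral_0_iff_AE) auto
  moreover have pos: "\<And>q. \<not> bvn_density sx sy r q \<le> 0" using bvn_pos[OF assms(1-4)] by (simp add: not_le)
  ultimately have "AE p in lborel. p \<notin> {a..a+1} \<times> {b..b+1}"
    by (elim eventually_mono) (use sub in \<open>auto simp: indicator_def ennreal_eq_0_iff pos split: if_splits\<close>)
  then have "emeasure lborel ({a..a+1} \<times> {b..b+1::real}) = 0"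
    by (subst (asm) AE_iff_measurable[of "{a..a+1} \<times> {b..b+1}"]) (auto intro!: borel_closed closed_Times)
  then show False using box_meas by simp
qed


lemma C1_borel[measurable]: "C1 a b \<in> sets borel"
  unfolding C1_def by (intro borel_open open_Collect_less continuous_intros)
lemma C2_borel[measurable]: "C2 a b \<in> sets borel"
  unfolding C2_def by (intro borel_open open_Collect_less continuous_intros)

lemma quad_bound: fixes X Y r :: real assumes "r^2 < 1"
  shows "(X^2+Y^2)/4 \<le> (X^2 - 2*r*X*Y + Y^2)/(2*(1-r^2))"
proof -
  have "(r*X - Y)^2 + (X - r*Y)^2 \<ge> 0" by simp
  then have "(1-r^2)*(X^2+Y^2) \<le> 2*(X^2-2*r*X*Y+Y^2)"
    by (simp add: power2_eq_square algebra_simps)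
  then show ?thesis using assms by (simp add: field_simps)
qed

lemma nd_int: "s > 0 \<Longrightarrow> (\<integral>\<^sup>+x. ennreal (normal_density 0 s x) \<partial>lborel) = 1"
  by (subst nn_integral_eq_integral) auto

lemma density_bound:
  assumes "sx > 0" "sy > 0" "r^2 < 1"
  shows "bvn_density sx sy r (x,y) \<le> 2/sqrt(1-r^2) * (normal_density 0 (sqrt 2 * sx) x * normal_density 0 (sqrt 2 * sy) y)"
proof -
  define X where "X = x/sx"
  define Y where "Y = y/sy"
  have Q: "x\<^sup>2 / sx\<^sup>2 - 2 * r * x * y / (sx * sy) + y\<^sup>2 / sy\<^sup>2 = X^2 - 2*r*X*Y + Y^2"
    by (simp add: X_def Y_def power_divide)
  have E: "x\<^sup>2 / (4 * sx\<^sup>2) + y\<^sup>2 / (4 * sy\<^sup>2) = (X^2+Y^2)/4"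
    by (simp add: X_def Y_def power_divide field_simps)
  have s1: "sqrt (2 * pi * (sqrt 2 * sx)\<^sup>2) = 2 * sx * sqrt pi"
    using assms by (simp add: power_mult_distrib real_sqrt_mult)
  have s2: "sqrt (2 * pi * (sqrt 2 * sy)\<^sup>2) = 2 * sy * sqrt pi"
    using assms by (simp add: power_mult_distrib real_sqrt_mult)
  have sp: "sqrt pi * sqrt pi = pi" by simp
  have r1: "sqrt (1-r^2) > 0" using assms by simp
  have "normal_density 0 (sqrt 2 * sx) x * normal_density 0 (sqrt 2 * sy) y
      = exp (- ((X^2+Y^2)/4)) / (4 * pi * sx * sy)"
    unfolding normal_density_def s1 s2 E[symmetric]
    using assms by (simp add: power_mult_distrib exp_add[symmetric] field_simps sp)
  moreover have "exp (- (X^2 - 2*r*X*Y + Y^2) / (2 * (1 - r\<^sup>2))) \<le> exp (- ((X^2+Y^2)/4))"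
  proof -
    have "-(X^2 - 2*r*X*Y + Y^2) / (2*(1-r^2)) \<le> - ((X^2+Y^2)/4)"
      using quad_bound[OF assms(3), of X Y] by (smt (verit) minus_divide_left)
    then show ?thesis by simp
  qed
  ultimately show ?thesis unfolding bvn_density_def Let_def fst_conv snd_conv Q
    using assms r1 by (simp add: field_simps)
qed

lemma bvn_finite:
  assumes "sx > 0" "sy > 0" "r^2 < 1"
  shows "emeasure (bvn sx sy r) UNIV \<noteq> \<infinity>"
proof -
  define n1 where "n1 = normal_density 0 (sqrt 2 * sx)"
  define n2 where "n2 = normal_density 0 (sqrt 2 * sy)"
  define C where "C = 2/sqrt(1-r^2)"
  have [measurable]: "n1 \<in> borel_measurable borel" "n2 \<in> borel_measurable borel"
    unfolding n1_def n2_def by auto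
  have i1: "(\<integral>\<^sup>+x. ennreal (n1 x) \<partial>lborel) = 1" unfolding n1_def using assms by (intro nd_int) auto
  have i2: "(\<integral>\<^sup>+x. ennreal (n2 x) \<partial>lborel) = 1" unfolding n2_def using assms by (intro nd_int) auto
  have "emeasure (bvn sx sy r) UNIV = (\<integral>\<^sup>+p. ennreal (bvn_density sx sy r p) \<partial>lborel)"
    unfolding bvn_def by (subst emeasure_density) auto
  also have "\<dots> \<le> (\<integral>\<^sup>+p. ennreal C * (ennreal (n1 (fst p)) * ennreal (n2 (snd p))) \<partial>lborel)"
  proof (intro nn_integral_mono)
    fix p :: "real \<times> real"
    obtain x y where p: "p = (x,y)" by fastforce
    have "bvn_density sx sy r p \<le> C * (n1 x * n2 y)"
      unfolding p C_def n1_def n2_def by (rule density_bound[OF assms])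
    moreover have "C \<ge> 0" "n1 x \<ge> 0" "n2 y \<ge> 0" unfolding C_def n1_def n2_def using assms by auto
    ultimately show "ennreal (bvn_density sx sy r p) \<le> ennreal C * (ennreal (n1 (fst p)) * ennreal (n2 (snd p)))"
      unfolding p by (simp add: ennreal_mult[symmetric] ennreal_leI)
  qed
  also have "\<dots> = ennreal C * (\<integral>\<^sup>+p. ennreal (n1 (fst p)) * ennreal (n2 (snd p)) \<partial>lborel)"
  proof (rule nn_integral_cmult)
    have c: "continuous_on UNIV (\<lambda>p::real\<times>real. n1 (fst p) * n2 (snd p))"
      unfolding n1_def n2_def normal_density_def divide_inverse by (intro continuous_intros)
    have "(\<lambda>p::real\<times>real. ennreal (n1 (fst p) * n2 (snd p))) \<in> borel_measurable borel"
      by (rule measurable_compose[OF borel_measurable_continuous_onI[OF c] measurable_ennreal])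
    moreover have "(\<lambda>p::real\<times>real. ennreal (n1 (fst p) * n2 (snd p))) = (\<lambda>p. ennreal (n1 (fst p)) * ennreal (n2 (snd p)))"
      by (auto simp: ennreal_mult n1_def n2_def)
    ultimately show "(\<lambda>p::real\<times>real. ennreal (n1 (fst p)) * ennreal (n2 (snd p))) \<in> borel_measurable lborel"
      by simp
  qed
  also have "(\<integral>\<^sup>+p. ennreal (n1 (fst p)) * ennreal (n2 (snd p)) \<partial>lborel)
      = (\<integral>\<^sup>+x. \<integral>\<^sup>+y. ennreal (n1 x) * ennreal (n2 y) \<partial>lborel \<partial>lborel)"
    by (subst lborel_prod[symmetric], subst lborel.nn_integral_fst[symmetric]) auto
  also have "\<dots> = (\<integral>\<^sup>+x. ennreal (n1 x) \<partial>lborel)"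
    by (intro nn_integral_cong) (simp add: nn_integral_cmult i2)
  finally show ?thesis using i1 by (auto simp: top_unique)
qed

lemma bvn_measure_pos:
  assumes "sx > 0" "sy > 0" "-1 < r" "r < 1"
  and [measurable]: "A \<in> sets borel" and sub: "{c..c+1} \<times> {d..d+1} \<subseteq> A"
  shows "measure (bvn sx sy r) A > 0"
proof -
  have r2: "r^2 < 1" using assms by (simp add: abs_square_less_1)
  have "emeasure (bvn sx sy r) A \<le> emeasure (bvn sx sy r) UNIV"
    by (rule emeasure_mono) (auto simp: bvn_def)
  then have "emeasure (bvn sx sy r) A < top" using bvn_finite[OF assms(1,2) r2]
    by (simp add: less_top[symmetric] top_unique) (metis top.not_eq_extremum top_unique)
  then show ?thesis using bvn_pos_set[OF assms]
    by (simp add: measure_def enn2real_positive_iff)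
qed

lemma K_sym:
  assumes "a \<noteq> b" "\<And>p. p \<in> C2 a b \<longleftrightarrow> -p \<in> C1 a b"
  shows "K sx sy r a b = (fst a + snd a + fst b + snd b) * measure (bvn sx sy r) (C1 a b)"
proof -
  have "emeasure (bvn sx sy r) (C2 a b) = emeasure (bvn sx sy r) (C1 a b)"
    by (rule bvn_sym_set) (auto simp: assms(2))
  then have "measure (bvn sx sy r) (C2 a b) = measure (bvn sx sy r) (C1 a b)"
    by (simp add: measure_def)
  then show ?thesis using assms(1) unfolding K_def by (simp add: algebra_simps)
qed

lemma C1_refl1: "C1 (u,w) (u,-w) = {p. w * snd p > 0}"
  by (auto simp: C1_def power2_eq_square algebra_simps)
lemma C2_refl1: "C2 (u,w) (u,-w) = {p. w * snd p < 0}"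
  by (auto simp: C2_def power2_eq_square algebra_simps)
lemma C1_refl2: "C1 (u,w) (-u,w) = {p. u * fst p > 0}"
  by (auto simp: C1_def power2_eq_square algebra_simps)
lemma C2_refl2: "C2 (u,w) (-u,w) = {p. u * fst p < 0}"
  by (auto simp: C2_def power2_eq_square algebra_simps)
lemma C1_anti: "C1 (u,w) (-u,-w) = {p. u * fst p + w * snd p > 0}"
  by (auto simp: C1_def power2_eq_square algebra_simps)
lemma C2_anti: "C2 (u,w) (-u,-w) = {p. u * fst p + w * snd p < 0}"
  by (auto simp: C2_def power2_eq_square algebra_simps)

lemma K_anti: "K sx sy r (u,w) (-u,-w) = 0"
proof (cases "(u,w) = (-u,-w)")
  case True then show ?thesis by (simp add: K_def)
next
  case False
  have cond: "\<And>p. p \<in> C2 (u,w) (-u,-w) \<longleftrightarrow> -p \<in> C1 (u,w) (-u,-w)"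
    by (auto simp: C1_anti C2_anti)
  have "K sx sy r (u,w) (-u,-w) = (u + w + (-u) + (-w)) * measure (bvn sx sy r) (C1 (u,w) (-u,-w))"
    using K_sym[OF False cond] by simp
  then show ?thesis by simp
qed

context
  fixes sx sy r :: real
  assumes pa: "sx > 0" "sy > 0" "-1 < r" "r < 1"
begin

lemma K_refl1: "\<exists>m>0. K sx sy r (u,w) (u,-w) = u * m"
proof (cases "w = 0")
  case True then show ?thesis by (intro exI[of _ 1]) (simp add: K_def)
next
  case False
  have K: "K sx sy r (u,w) (u,-w) = (u + w + u + (-w)) * measure (bvn sx sy r) (C1 (u,w) (u,-w))"
    using K_sym[of "(u,w)" "(u,-w)"] False by (simp add: C1_refl1 C2_refl1)
  have "measure (bvn sx sy r) (C1 (u,w) (u,-w)) > 0"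
  proof (cases "w > 0")
    case True
    show ?thesis by (rule bvn_measure_pos[OF pa C1_borel, where c=0 and d=1]) (use True in \<open>auto simp: C1_refl1\<close>)
  next
    case False
    with \<open>w \<noteq> 0\<close> have "w < 0" by simp
    show ?thesis by (rule bvn_measure_pos[OF pa C1_borel, where c=0 and d="-2"])
      (use \<open>w < 0\<close> in \<open>auto simp: C1_refl1 mult_neg_neg\<close>)
  qed
  then show ?thesis using K by (intro exI[of _ "2 * measure (bvn sx sy r) (C1 (u,w) (u,-w))"]) simp
qed

lemma K_refl2: "\<exists>m>0. K sx sy r (u,w) (-u,w) = w * m"
proof (cases "u = 0")
  case True then show ?thesis by (intro exI[of _ 1]) (simp add: K_def)
next
  case False
  have K: "K sx sy r (u,w) (-u,w) = (u + w + (-u) + w) * measure (bvn sx sy r) (C1 (u,w) (-u,w))"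
    using K_sym[of "(u,w)" "(-u,w)"] False by (simp add: C1_refl2 C2_refl2)
  have "measure (bvn sx sy r) (C1 (u,w) (-u,w)) > 0"
  proof (cases "u > 0")
    case True
    show ?thesis by (rule bvn_measure_pos[OF pa C1_borel, where c=1 and d=0]) (use True in \<open>auto simp: C1_refl2\<close>)
  next
    case False
    with \<open>u \<noteq> 0\<close> have "u < 0" by simp
    show ?thesis by (rule bvn_measure_pos[OF pa C1_borel, where c="-2" and d=0])
      (use \<open>u < 0\<close> in \<open>auto simp: C1_refl2 mult_neg_neg\<close>)
  qed
  then show ?thesis using K by (intro exI[of _ "2 * measure (bvn sx sy r) (C1 (u,w) (-u,w))"]) simp
qed

end

theorem mainTheorem6:
  fixes sx sy r :: real and S :: "(real \<times> real) set"
    and x1 y1 x2 y2 :: real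
  assumes "sx > 0" and "sy > 0" and "-1 < r" and "r < 1"
    and "S \<noteq> {}" and "compact S"
    and "\<And>x y. (x, y) \<in> S \<Longrightarrow> (-x, y) \<in> S \<and> (x, -y) \<in> S \<and> (-x, -y) \<in> S"
    and "(x1, y1) \<in> S" and "(x2, y2) \<in> S"
    and "\<And>a b. a \<in> S \<Longrightarrow> b \<in> S \<Longrightarrow>
           K sx sy r (x1, y1) b \<le> K sx sy r (x1, y1) (x2, y2) \<and>
           K sx sy r (x1, y1) (x2, y2) \<le> K sx sy r a (x2, y2)"
  shows "x2 \<ge> 0 \<and> y2 \<ge> 0 \<and> x1 \<le> 0 \<and> y1 \<le> 0"
proof -
  note pa = assms(1-4)
  note sym1 = assms(7)[OF assms(8)] and sym2 = assms(7)[OF assms(9)]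
  have up: "K sx sy r (x1, y1) b \<le> K sx sy r (x1, y1) (x2, y2)" if "b \<in> S" for b
    using assms(10)[OF assms(8) that] by simp
  have lo: "K sx sy r (x1, y1) (x2, y2) \<le> K sx sy r a (x2, y2)" if "a \<in> S" for a
    using assms(10)[OF that assms(9)] by simp
  have v0: "0 \<le> K sx sy r (x1, y1) (x2, y2)"
    using up[of "(-x1,-y1)"] sym1 K_anti[of sx sy r x1 y1] by simp
  have v1: "K sx sy r (x1, y1) (x2, y2) \<le> 0"
    using lo[of "(-x2,-y2)"] sym2 K_anti[of sx sy r "-x2" "-y2"] by simp
  obtain m1 where m1: "m1 > 0" "K sx sy r (x2,-y2) (x2,y2) = x2 * m1"
    using K_refl1[OF pa, of x2 "-y2"] by auto
  obtain m2 where m2: "m2 > 0" "K sx sy r (-x2,y2) (x2,y2) = y2 * m2"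
    using K_refl2[OF pa, of "-x2" y2] by auto
  obtain m3 where m3: "m3 > 0" "K sx sy r (x1,y1) (x1,-y1) = x1 * m3"
    using K_refl1[OF pa, of x1 y1] by auto
  obtain m4 where m4: "m4 > 0" "K sx sy r (x1,y1) (-x1,y1) = y1 * m4"
    using K_refl2[OF pa, of x1 y1] by auto
  have "0 \<le> x2 * m1" using lo[of "(x2,-y2)"] sym2 v0 m1 by simp
  then have "x2 \<ge> 0" using m1(1) by (simp add: zero_le_mult_iff)
  moreover have "0 \<le> y2 * m2" using lo[of "(-x2,y2)"] sym2 v0 m2 by simp
  then have "y2 \<ge> 0" using m2(1) by (simp add: zero_le_mult_iff)
  moreover have "x1 * m3 \<le> 0" using up[of "(x1,-y1)"] sym1 v1 m3 by simp
  then have "x1 \<le> 0" using m3(1) by (simp add: mult_le_0_iff)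
  moreover have "y1 * m4 \<le> 0" using up[of "(-x1,y1)"] sym1 v1 m4 by simp
  then have "y1 \<le> 0" using m4(1) by (simp add: mult_le_0_iff)
  ultimately show ?thesis by simp
qed

end
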